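(* Let $s\ge3$ and $k\ge1$, and let $\Gamma$ be a connected subgraph of $P_{s,k}$ with $n=|\mathcal{E}\Gamma|$ edges. Suppose there exist an edge transitive automorphism $\psi\in\mathrm{Aut}(P_{s,k})$ and an edge $e\in\mathcal{E}\Gamma$ such that $\{e,\psi(e),\dots,\psi^{n-1}(e)\}=\mathcal{E}\Gamma$ (as unoriented edges). Let $\mathfrak{s}_0,\dots,\mathfrak{s}_{s-1}$ be the sides of $P_{s,k}$, and write $n=sm+t$ with $m\in\{1,\dots,k\}$ and $t\in\{0,\dots,s-1\}$. Then (i) exactly $t$ sides satisfy $|\mathfrak{s}_i\cap\mathcal{E}\Gamma|=m+1$, and (ii) the remaining $s-t$ sides satisfy $|\mathfrak{s}_i\cap\mathcal{E}\Gamma|=m$.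
   Context: A graph is a finite 1-dimensional CW complex (multiple edges and loops allowed). A graph automorphism is a bijection of vertices together with a bijection of oriented edges (possibly reversing orientation) compatible with endpoints and edge reversal; it is edge transitive if the group it generates acts transitively on the unoriented edges. The $s$-gonal graph of depth $k$, $P_{s,k}$, has vertices $v_0,\dots,v_{s-1}$ and edges $e_i^j$ ($0\le i\le s-1$, $1\le j\le k$) with $e_i^j$ joining $v_i$ to $v_{i+1}$ (indices mod $s$). The sides of $P_{s,k}$ are the sets $\mathfrak{s}_i=\{e_i^j:1\le j\le k\}$. *)

theory Defs
  imports Main
begin

text \<open>Unoriented edges: e_i^j represented by (i,j) with i < s and 1 \<le> j \<le> k.
  Oriented edges: (i,j,b); b = True means oriented from v_i to v_{i+1 mod s},
  b = False the reverse orientation.\<close>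

type_synonym uedge = "nat \<times> nat"
type_synonym oedge = "nat \<times> nat \<times> bool"

definition P_verts :: "nat \<Rightarrow> nat set" where
  "P_verts s = {..<s}"

definition P_edges :: "nat \<Rightarrow> nat \<Rightarrow> uedge set" where
  "P_edges s k = {(i, j). i < s \<and> 1 \<le> j \<and> j \<le> k}"

definition P_oedges :: "nat \<Rightarrow> nat \<Rightarrow> oedge set" where
  "P_oedges s k = {(i, j, b). i < s \<and> 1 \<le> j \<and> j \<le> k}"

definition o_src :: "nat \<Rightarrow> oedge \<Rightarrow> nat" where
  "o_src s x = (case x of (i, j, b) \<Rightarrow> if b then i else (i + 1) mod s)"

definition o_tgt :: "nat \<Rightarrow> oedge \<Rightarrow> nat" where
  "o_tgt s x = (case x of (i, j, b) \<Rightarrow> if b then (i + 1) mod s else i)"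

definition o_rev :: "oedge \<Rightarrow> oedge" where
  "o_rev x = (case x of (i, j, b) \<Rightarrow> (i, j, \<not> b))"

definition undir :: "oedge \<Rightarrow> uedge" where
  "undir x = (case x of (i, j, b) \<Rightarrow> (i, j))"

definition u_ends :: "nat \<Rightarrow> uedge \<Rightarrow> nat set" where
  "u_ends s e = (case e of (i, j) \<Rightarrow> {i, (i + 1) mod s})"

definition P_aut :: "nat \<Rightarrow> nat \<Rightarrow> (nat \<Rightarrow> nat) \<Rightarrow> (oedge \<Rightarrow> oedge) \<Rightarrow> bool" where
  "P_aut s k fv fe \<longleftrightarrow>
     bij_betw fv (P_verts s) (P_verts s) \<and>
     bij_betw fe (P_oedges s k) (P_oedges s k) \<and>
     (\<forall>x \<in> P_oedges s k. fe (o_rev x) = o_rev (fe x)) \<and>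
     (\<forall>x \<in> P_oedges s k. o_src s (fe x) = fv (o_src s x) \<and> o_tgt s (fe x) = fv (o_tgt s x))"

definition u_act :: "(oedge \<Rightarrow> oedge) \<Rightarrow> uedge \<Rightarrow> uedge" where
  "u_act fe e = (case e of (i, j) \<Rightarrow> undir (fe (i, j, True)))"

text \<open>As the automorphism group of a finite
  graph is finite, the generated group consists of the non-negative powers.\<close>
definition edge_transitive :: "nat \<Rightarrow> nat \<Rightarrow> (oedge \<Rightarrow> oedge) \<Rightarrow> bool" where
  "edge_transitive s k fe \<longleftrightarrow>
     (\<forall>e1 \<in> P_edges s k. \<forall>e2 \<in> P_edges s k. \<exists>n::nat. (u_act fe ^^ n) e1 = e2)"

definition P_subgraph :: "nat \<Rightarrow> nat \<Rightarrow> nat set \<Rightarrow> uedge set \<Rightarrow> bool" where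
  "P_subgraph s k VG EG \<longleftrightarrow>
     VG \<subseteq> P_verts s \<and> EG \<subseteq> P_edges s k \<and> (\<forall>e \<in> EG. u_ends s e \<subseteq> VG)"

definition sub_adj :: "nat \<Rightarrow> uedge set \<Rightarrow> (nat \<times> nat) set" where
  "sub_adj s EG = {(u, v). \<exists>e \<in> EG. u_ends s e = {u, v}}"

definition sub_connected :: "nat \<Rightarrow> nat set \<Rightarrow> uedge set \<Rightarrow> bool" where
  "sub_connected s VG EG \<longleftrightarrow>
     VG \<noteq> {} \<and> (\<forall>u \<in> VG. \<forall>v \<in> VG. (u, v) \<in> (sub_adj s EG)\<^sup>*)"

definition side :: "nat \<Rightarrow> nat \<Rightarrow> uedge set" where
  "side k i = {(i, j) | j. 1 \<le> j \<and> j \<le> k}"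

end

theory Submission
  imports Defs
begin

lemma side_det:
  fixes s a b :: nat
  assumes "3 \<le> s" "a < s" "b < s" "{a, (a+1) mod s} = {b, (b+1) mod s}"
  shows "a = b"
proof (rule ccontr)
  assume ne: "a \<noteq> b"
  have m1: "a \<in> {b, (b+1) mod s}" using assms(4) by blast
  have m2: "b \<in> {a, (a+1) mod s}" using assms(4) by blast
  have h1: "a = (b+1) mod s" using m1 ne by blast
  have h2: "b = (a+1) mod s" using m2 ne by blast
  show False
  proof (cases "b + 1 < s")
    case True
    then have ab: "a = b + 1" using h1 by simp
    then have hb: "b = (b + 2) mod s" using h2 by simp
    show False
    proof (cases "b + 2 < s")
      case True
      then show False using hb by simp
    next
      case False
      then have "b + 2 = s" using ab assms by simp
      then show False using hb assms by simp
    qed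
  next
    case False
    then have "b + 1 = s" using assms by simp
    then have "a = 0" using h1 by simp
    then have "b = 1 mod s" using h2 by simp
    then show False using assms \<open>b + 1 = s\<close> by simp
  qed
qed

lemma count_mod:
  assumes "c < s" "t < s"
  shows "card {j. j < s*m+t \<and> j mod s = c} = (if c < t then m+1 else m)"
proof -
  define Q where "Q = (if c < t then {..m} else {..<m})"
  have "{j. j < s*m+t \<and> j mod s = c} = (\<lambda>q. s*q+c) ` Q"
  proof (rule set_eqI, rule iffI)
    fix j assume j: "j \<in> {j. j < s*m+t \<and> j mod s = c}"
    have jj: "j = s*(j div s) + c" using j mult_div_mod_eq[of s j] by simp
    have "j div s \<in> Q"
    proof (cases "c < t")
      case True
      have "\<not> j div s \<ge> m+1"
      proof
        assume "j div s \<ge> m+1"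
        then have "s*(j div s) \<ge> s*(m+1)" by (rule mult_le_mono2)
        then show False using j jj assms by (simp add: algebra_simps)
      qed
      then show ?thesis using True by (simp add: Q_def)
    next
      case False
      have "\<not> j div s \<ge> m"
      proof
        assume "j div s \<ge> m"
        then have "s*(j div s) \<ge> s*m" by (rule mult_le_mono2)
        moreover have "j < s*m+t" using j by simp
        ultimately show False using jj False by linarith
      qed
      then show ?thesis using False by (simp add: Q_def)
    qed
    then show "j \<in> (\<lambda>q. s*q+c) ` Q" using jj by (metis image_eqI)
  next
    fix j assume "j \<in> (\<lambda>q. s*q+c) ` Q"
    then obtain q where q: "q \<in> Q" "j = s*q+c" by auto
    have "j < s*m+t"
    proof (cases "c < t")
      case True
      then have "q \<le> m" using q by (simp add: Q_def)
      then have "s*q \<le> s*m" by (rule mult_le_mono2)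
      then show ?thesis using q True by linarith
    next
      case False
      then have "q + 1 \<le> m" using q by (simp add: Q_def)
      then have "s*(q+1) \<le> s*m" by (rule mult_le_mono2)
      then show ?thesis using q assms by (simp add: algebra_simps)
    qed
    then show "j \<in> {j. j < s*m+t \<and> j mod s = c}" using q assms by simp
  qed
  moreover have "inj_on (\<lambda>q. s*q+c) Q" using assms by (intro inj_onI) simp
  ultimately have "card {j. j < s*m+t \<and> j mod s = c} = card Q" by (simp add: card_image)
  then show ?thesis by (simp add: Q_def)
qed

lemma cyc:
  fixes \<sigma> :: "nat \<Rightarrow> nat"
  assumes into: "\<forall>a<s. \<sigma> a < s" and tr: "\<forall>a<s. \<forall>b<s. \<exists>n. (\<sigma>^^n) a = b" and a: "a < s"
  shows "inj_on (\<lambda>j. (\<sigma>^^j) a) {..<s}" "(\<sigma>^^s) a = a" "(\<sigma>^^n) a = (\<sigma>^^(n mod s)) a"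
proof -
  have inA: "(\<sigma>^^n) x < s" if "x < s" for n x using that into by (induction n) auto
  have bck: "(\<sigma>^^(j-i)) a = a" if "i < j" "(\<sigma>^^i) a = (\<sigma>^^j) a" for i j
  proof -
    obtain n where n: "(\<sigma>^^n) ((\<sigma>^^i) a) = a" using tr inA a by blast
    have "(\<sigma>^^(j-i)) a = (\<sigma>^^(j-i)) ((\<sigma>^^n) ((\<sigma>^^i) a))" using n by simp
    also have "\<dots> = (\<sigma>^^((j-i)+n+i)) a" by (simp add: funpow_add)
    also have "\<dots> = (\<sigma>^^(n+j)) a" using that by (simp add: algebra_simps)
    also have "\<dots> = (\<sigma>^^n) ((\<sigma>^^j) a)" by (simp add: funpow_add)
    also have "\<dots> = a" using n that by simp
    finally show ?thesis .
  qed
  have "\<not> inj_on (\<lambda>j. (\<sigma>^^j) a) {..s}"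
  proof
    assume "inj_on (\<lambda>j. (\<sigma>^^j) a) {..s}"
    moreover have "(\<lambda>j. (\<sigma>^^j) a) ` {..s} \<subseteq> {..<s}" using inA a by auto
    ultimately have "card {..s} \<le> card {..<s::nat}" by (intro card_inj_on_le) auto
    then show False by simp
  qed
  then obtain i j where ij: "i \<le> s" "j \<le> s" "i \<noteq> j" "(\<sigma>^^i) a = (\<sigma>^^j) a"
    unfolding inj_on_def by auto
  have ex: "\<exists>p. 0 < p \<and> p \<le> s \<and> (\<sigma>^^p) a = a"
  proof (cases "i < j")
    case True then show ?thesis using bck[OF True ij(4)] ij by (intro exI[of _ "j-i"]) auto
  next
    case False then have "j < i" using ij by simp
    then show ?thesis using bck[OF \<open>j<i\<close> ij(4)[symmetric]] ij by (intro exI[of _ "i-j"]) auto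
  qed
  define p where "p = (LEAST p. 0 < p \<and> (\<sigma>^^p) a = a)"
  from ex obtain p0 where p0: "0 < p0" "p0 \<le> s" "(\<sigma>^^p0) a = a" by blast
  have p12: "0 < p \<and> (\<sigma>^^p) a = a" unfolding p_def by (rule LeastI[of _ p0]) (use p0 in simp)
  have "p \<le> p0" unfolding p_def by (rule Least_le) (use p0 in simp)
  then have p: "0 < p" "(\<sigma>^^p) a = a" "p \<le> s" using p12 p0 by auto
  have pq: "(\<sigma>^^(p*q)) a = a" for q
  proof (induction q)
    case (Suc q)
    have "(\<sigma>^^(p*Suc q)) a = (\<sigma>^^p) ((\<sigma>^^(p*q)) a)" by (simp only: mult_Suc_right funpow_add comp_apply)
    then show ?case using Suc p by simp
  qed simp
  have per: "(\<sigma>^^n) a = (\<sigma>^^(n mod p)) a" for n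
  proof -
    have "(\<sigma>^^n) a = (\<sigma>^^(n mod p + p*(n div p))) a" by simp
    also have "\<dots> = (\<sigma>^^(n mod p)) ((\<sigma>^^(p*(n div p))) a)" by (simp only: funpow_add comp_apply)
    also have "\<dots> = (\<sigma>^^(n mod p)) a" by (simp only: pq)
    finally show ?thesis .
  qed
  have "{..<s} \<subseteq> (\<lambda>j. (\<sigma>^^j) a) ` {..<p}"
  proof
    fix b assume "b \<in> {..<s}"
    then obtain n where "(\<sigma>^^n) a = b" using tr a by auto
    then show "b \<in> (\<lambda>j. (\<sigma>^^j) a) ` {..<p}" using per[of n] p(1) by (metis image_eqI lessThan_iff mod_less_divisor)
  qed
  then have "card {..<s} \<le> card {..<p}" by (metis surj_card_le finite_lessThan)
  then have ps: "p = s" using p by simp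
  show "(\<sigma>^^s) a = a" using p ps by simp
  show "(\<sigma>^^n) a = (\<sigma>^^(n mod s)) a" for n using per ps by simp
  show "inj_on (\<lambda>j. (\<sigma>^^j) a) {..<s}"
  proof (rule linorder_inj_onI')
    fix x y assume xy: "x \<in> {..<s}" "y \<in> {..<s}" "x < y"
    show "(\<sigma>^^x) a \<noteq> (\<sigma>^^y) a"
    proof
      assume eq: "(\<sigma>^^x) a = (\<sigma>^^y) a"
      then have "(\<sigma>^^(y-x)) a = a" using bck xy by blast
      moreover have "y - x < p" using xy ps by auto
      ultimately show False using not_less_Least[of "y-x" "\<lambda>p. 0 < p \<and> (\<sigma>^^p) a = a"] xy unfolding p_def by auto
    qed
  qed
qed

lemma side_iff: "x \<in> P_edges s k \<Longrightarrow> x \<in> side k i \<longleftrightarrow> fst x = i"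
  by (cases x) (auto simp: P_edges_def side_def)

lemma ends_eq: "u_ends s x = {fst x, (fst x + 1) mod s}"
  by (cases x) (simp add: u_ends_def)

theorem lemma7p3:
  fixes s k m t :: nat and VG :: "nat set" and EG :: "uedge set"
    and fv :: "nat \<Rightarrow> nat" and fe :: "oedge \<Rightarrow> oedge" and e :: uedge
  assumes "s \<ge> 3" and "k \<ge> 1"
    and "P_subgraph s k VG EG" and "sub_connected s VG EG"
    and "P_aut s k fv fe" and "edge_transitive s k fe"
    and "e \<in> EG"
    and "(\<lambda>i. (u_act fe ^^ i) e) ` {..<card EG} = EG"
    and "card EG = s * m + t" and "1 \<le> m" and "m \<le> k" and "t < s"
  shows "card {i. i < s \<and> card (side k i \<inter> EG) = m + 1} = t
       \<and> (\<forall>i < s. card (side k i \<inter> EG) \<noteq> m + 1 \<longrightarrow> card (side k i \<inter> EG) = m)"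
proof -
  note A = assms
  define ua where "ua = u_act fe"
  have bij: "bij_betw fe (P_oedges s k) (P_oedges s k)"
    and st: "\<forall>x \<in> P_oedges s k. o_src s (fe x) = fv (o_src s x) \<and> o_tgt s (fe x) = fv (o_tgt s x)"
    using A(5) unfolding P_aut_def by auto
  have he: "ua x \<in> P_edges s k \<and> u_ends s (ua x) = {fv (fst x), fv ((fst x + 1) mod s)}"
    if x: "x \<in> P_edges s k" for x
  proof -
    obtain i j where ij: "x = (i, j)" by (cases x)
    have xo: "(i, j, True) \<in> P_oedges s k" using x ij by (simp add: P_edges_def P_oedges_def)
    then have yo: "fe (i, j, True) \<in> P_oedges s k" using bij by (meson bij_betwE)
    obtain i' j' b' where y: "fe (i, j, True) = (i', j', b')" by (cases "fe (i, j, True)") auto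
    have uax: "ua x = (i', j')" using ij y by (simp add: ua_def u_act_def undir_def)
    have "ua x \<in> P_edges s k" using yo y uax by (simp add: P_edges_def P_oedges_def)
    moreover have "u_ends s (ua x) = {o_src s (fe (i, j, True)), o_tgt s (fe (i, j, True))}"
      using uax y by (cases b') (auto simp: u_ends_def o_src_def o_tgt_def)
    moreover have "o_src s (fe (i, j, True)) = fv i" "o_tgt s (fe (i, j, True)) = fv ((i+1) mod s)"
      using st xo by (auto simp: o_src_def o_tgt_def)
    ultimately show ?thesis using ij by simp
  qed
  define \<sigma> where "\<sigma> i = fst (ua (i, 1))" for i
  have k1: "(i, 1) \<in> P_edges s k" if "i < s" for i using that A(2) by (simp add: P_edges_def)
  have fstlt: "fst z < s" if "z \<in> P_edges s k" for z using that by (auto simp: P_edges_def)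
  have hs: "fst (ua x) = \<sigma> (fst x)" if x: "x \<in> P_edges s k" for x
  proof -
    have f: "fst x < s" using fstlt x .
    have e1: "ua x \<in> P_edges s k" "ua (fst x, 1) \<in> P_edges s k" using he x k1[OF f] by auto
    have "u_ends s (ua x) = u_ends s (ua (fst x, 1))" using he[OF x] he[OF k1[OF f]] by simp
    then have "{fst (ua x), (fst (ua x) + 1) mod s} = {fst (ua (fst x, 1)), (fst (ua (fst x, 1)) + 1) mod s}"
      by (simp only: ends_eq)
    then show ?thesis unfolding \<sigma>_def using side_det[OF A(1) fstlt[OF e1(1)] fstlt[OF e1(2)]] by blast
  qed
  have it: "(ua^^n) x \<in> P_edges s k \<and> fst ((ua^^n) x) = (\<sigma>^^n) (fst x)" if "x \<in> P_edges s k" for n x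
    using that
  proof (induction n)
    case (Suc n)
    then show ?case using he hs by simp
  qed simp
  have into: "\<forall>a<s. \<sigma> a < s" using he k1 fstlt unfolding \<sigma>_def by blast
  have tr: "\<forall>a<s. \<forall>b<s. \<exists>n. (\<sigma>^^n) a = b"
  proof (intro allI impI)
    fix a b assume ab: "a < s" "b < s"
    obtain n where "(ua^^n) (a, 1) = (b, 1)"
      using A(6) k1[OF ab(1)] k1[OF ab(2)] unfolding edge_transitive_def ua_def by blast
    then show "\<exists>n. (\<sigma>^^n) a = b" using it[OF k1[OF ab(1)], of n] by auto
  qed
  have EGP: "EG \<subseteq> P_edges s k" using A(3) by (simp add: P_subgraph_def)
  define a0 where "a0 = fst e"
  have a0: "a0 < s" using A(7) EGP fstlt unfolding a0_def by blast
  define h where "h j = (\<sigma>^^j) a0" for j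
  have hinj: "inj_on h {..<s}" and hper: "h j = h (j mod s)" for j
    using cyc[OF into tr a0] unfolding h_def by auto
  have hsub: "h ` {..<s} \<subseteq> {..<s}"
  proof
    fix y assume "y \<in> h ` {..<s}"
    then obtain j where "y = h j" by auto
    have itj: "(ua^^j) e \<in> P_edges s k \<and> fst ((ua^^j) e) = (\<sigma>^^j) (fst e)"
      using it[OF EGP[THEN subsetD, OF A(7)], of j] .
    then have "fst ((ua^^j) e) < s" using fstlt by blast
    then show "y \<in> {..<s}" using itj \<open>y = h j\<close> unfolding h_def a0_def by simp
  qed
  have "card (h ` {..<s}) = card {..<s}" using hinj by (rule card_image)
  then have hrange: "h ` {..<s} = {..<s}"
    using hsub by (intro card_subset_eq) auto
  define n where "n = card EG"
  define g where "g j = (ua^^j) e" for j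
  have "P_edges s k \<subseteq> {..<s} \<times> {..k}" by (auto simp: P_edges_def)
  then have fin: "finite EG" using EGP by (meson finite_SigmaI finite_lessThan finite_atMost finite_subset)
  have gim: "g ` {..<n} = EG" using A(8) unfolding g_def ua_def n_def .
  have ginj: "inj_on g {..<n}"
    proof (rule eq_card_imp_inj_on)
    show "card (g ` {..<n}) = card {..<n}" unfolding gim by (simp add: n_def)
  qed simp
  have fg: "fst (g j) = h j" for j using it[OF EGP[THEN subsetD, OF A(7)], of j] unfolding g_def h_def a0_def by simp
  have cnt: "card (side k (h c) \<inter> EG) = (if c < t then m + 1 else m)" if c: "c < s" for c
  proof -
    have "side k (h c) \<inter> EG = g ` {j. j < n \<and> j mod s = c}"
    proof (rule set_eqI, rule iffI)
      fix x assume x: "x \<in> side k (h c) \<inter> EG"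
      then obtain j where j: "j < n" "x = g j" using gim by auto
      have "fst x = h c" using x EGP side_iff by blast
      then have "h (j mod s) = h c" using j fg hper by simp
      then have "j mod s = c" using hinj c A(1) by (simp add: inj_on_eq_iff)
      then show "x \<in> g ` {j. j < n \<and> j mod s = c}" using j by auto
    next
      fix x assume "x \<in> g ` {j. j < n \<and> j mod s = c}"
      then obtain j where j: "j < n" "j mod s = c" "x = g j" by auto
      have xe: "x \<in> EG" using j gim by auto
      have "fst x = h c" using j fg hper by metis
      then show "x \<in> side k (h c) \<inter> EG" using xe EGP side_iff by blast
    qed
    moreover have "inj_on g {j. j < n \<and> j mod s = c}" using ginj by (rule inj_on_subset) auto
    ultimately have "card (side k (h c) \<inter> EG) = card {j. j < n \<and> j mod s = c}" by (simp add: card_image)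
    also have "\<dots> = (if c < t then m + 1 else m)" unfolding n_def A(9) by (rule count_mod[OF c A(12)])
    finally show ?thesis .
  qed
  have "{i. i < s \<and> card (side k i \<inter> EG) = m + 1} = h ` {..<t}"
  proof (rule set_eqI, rule iffI)
    fix i assume i: "i \<in> {i. i < s \<and> card (side k i \<inter> EG) = m + 1}"
    then have "i \<in> h ` {..<s}" using hrange by simp
    then obtain c where c: "c < s" "i = h c" by auto
    then have "c < t" using cnt[OF c(1)] i by (auto split: if_splits)
    then show "i \<in> h ` {..<t}" using c by auto
  next
    fix i assume "i \<in> h ` {..<t}"
    then obtain c where c: "c < t" "i = h c" by auto
    then have "c < s" using A(12) by simp
    then show "i \<in> {i. i < s \<and> card (side k i \<inter> EG) = m + 1}"
      using cnt c hrange by auto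
  qed
  moreover have "card (h ` {..<t}) = t"
    using inj_on_subset[OF hinj, of "{..<t}"] A(12) by (simp add: card_image)
  moreover have "\<forall>i < s. card (side k i \<inter> EG) \<noteq> m + 1 \<longrightarrow> card (side k i \<inter> EG) = m"
  proof (intro allI impI)
    fix i assume i: "i < s" "card (side k i \<inter> EG) \<noteq> m + 1"
    then have "i \<in> h ` {..<s}" using hrange by simp
    then obtain c where c: "c < s" "i = h c" by auto
    then show "card (side k i \<inter> EG) = m" using cnt[OF c(1)] i by (auto split: if_splits)
  qed
  ultimately show ?thesis by simp
qed

end
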